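(* Let $\mathcal{A}$ be a family of nonempty subsets of $\mathbb{R}^n$ closed under linear combinations, and let $\mathcal{F}:\mathcal{A}\to\mathbb{R}_{\geqslant0}$ be decreasing under set inclusion and super-homogeneous of degree $1/\alpha$ for some $\alpha<0$. Let $K,L\in\mathcal{A}$ with $\mathcal{F}(K)\mathcal{F}(L)>0$ satisfy, for all $\lambda\in(0,1)$, \[ \mathcal{F}\bigl((1-\lambda)K+\lambda L\bigr)\leqslant C\bigl((1-\lambda)\mathcal{F}(K)^\alpha+\lambda\mathcal{F}(L)^\alpha\bigr)^{1/\alpha}\qquad(\ast) \] for some constant $C>0$. Then for any $p\geqslant1$ and all $\lambda\in(0,1)$, \[ \mathcal{F}\bigl((1-\lambda)\cdot K+_p\lambda\cdot L\bigr)\leqslant C\bigl((1-\lambda)\mathcal{F}(K)^{p\alpha}+\lambda\mathcal{F}(L)^{p\alpha}\bigr)^{1/(p\alpha)} \] whenever $(1-\lambda)\cdot K+_p\lambda\cdot L\in\mathcal{A}$. If equality holds for some $\lambda\in(0,1)$ and $p>1$, then $K,L$ satisfy $(\ast)$ with equality for some $\bar\lambda\in(0,1)$; if in addition $\mathcal{F}$ is strictly decreasing and $K,L$ are compact, then $\mathrm{conv}\,K$ and $\mathrm{conv}\,L$ contain the origin and are dilatates of each other; if furthermore $\mathcal{F}$ is strictly super-homogeneous of degree $1/\alpha$, then $\mathrm{conv}\,K=\mathrm{conv}\,L$.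
   Context: $\mathcal{F}$ is super-homogeneous of degree $1/\alpha$ ($\alpha\neq0$) if $\mathcal{F}(rK)\geqslant r^{1/\alpha}\mathcal{F}(K)$ for all $r\geqslant1$, strictly if the inequality is strict whenever $\mathcal{F}(K)>0$ and $r>1$. Strictly decreasing means $A\subsetneq B$ implies $\mathcal{F}(A)>\mathcal{F}(B)$. A dilatate of $A$ is $\lambda A$, $\lambda\geqslant0$. For $p>1$, $1/p+1/q=1$; $K+_pL=\{(1-\mu)^{1/q}x+\mu^{1/q}y: x\in K, y\in L, \mu\in[0,1]\}$, $\lambda\cdot K=\lambda^{1/p}K$; for $p=1$ this is Minkowski addition. *)

theory Defs
  imports "HOL-Analysis.Analysis"
begin

definition lin_comb :: "real \<Rightarrow> 'a::real_vector set \<Rightarrow> real \<Rightarrow> 'a set \<Rightarrow> 'a set" where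
  "lin_comb a K b L = {a *\<^sub>R x + b *\<^sub>R y | x y. x \<in> K \<and> y \<in> L}"

definition closed_lin_comb :: "'a::real_vector set set \<Rightarrow> bool" where
  "closed_lin_comb \<A> \<longleftrightarrow> (\<forall>A\<in>\<A>. \<forall>B\<in>\<A>. \<forall>a b. lin_comb a A b B \<in> \<A>)"

definition decreasing_on :: "'a set set \<Rightarrow> ('a set \<Rightarrow> real) \<Rightarrow> bool" where
  "decreasing_on \<A> F \<longleftrightarrow> (\<forall>A\<in>\<A>. \<forall>B\<in>\<A>. A \<subseteq> B \<longrightarrow> F B \<le> F A)"

definition strictly_decreasing_on :: "'a set set \<Rightarrow> ('a set \<Rightarrow> real) \<Rightarrow> bool" where
  "strictly_decreasing_on \<A> F \<longleftrightarrow> (\<forall>A\<in>\<A>. \<forall>B\<in>\<A>. A \<subset> B \<longrightarrow> F B < F A)"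

definition super_homogeneous_on ::
  "'a::real_vector set set \<Rightarrow> ('a set \<Rightarrow> real) \<Rightarrow> real \<Rightarrow> bool" where
  "super_homogeneous_on \<A> F \<alpha> \<longleftrightarrow>
     (\<forall>K\<in>\<A>. \<forall>r::real. r \<ge> 1 \<longrightarrow> F ((\<lambda>x. r *\<^sub>R x) ` K) \<ge> r powr (1/\<alpha>) * F K)"

definition strictly_super_homogeneous_on ::
  "'a::real_vector set set \<Rightarrow> ('a set \<Rightarrow> real) \<Rightarrow> real \<Rightarrow> bool" where
  "strictly_super_homogeneous_on \<A> F \<alpha> \<longleftrightarrow> super_homogeneous_on \<A> F \<alpha> \<and>
     (\<forall>K\<in>\<A>. \<forall>r::real. r > 1 \<longrightarrow> F K > 0 \<longrightarrow> F ((\<lambda>x. r *\<^sub>R x) ` K) > r powr (1/\<alpha>) * F K)"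

definition p_scale :: "real \<Rightarrow> real \<Rightarrow> 'a::real_vector set \<Rightarrow> 'a set" where
  "p_scale p s K = (\<lambda>x. (s powr (1/p)) *\<^sub>R x) ` K"

(* L_p sum; for p = 1 it is Minkowski addition (convention 0^0 = 1);
   for p > 1, 1/q = 1 - 1/p *)
definition p_sum :: "real \<Rightarrow> 'a::real_vector set \<Rightarrow> 'a set \<Rightarrow> 'a set" where
  "p_sum p K L = (if p = 1 then {x + y | x y. x \<in> K \<and> y \<in> L}
     else {((1 - \<mu>) powr (1 - 1/p)) *\<^sub>R x + (\<mu> powr (1 - 1/p)) *\<^sub>R y | x y \<mu>.
             x \<in> K \<and> y \<in> L \<and> 0 \<le> \<mu> \<and> \<mu> \<le> 1})"

end

theory Submission
  imports Defs
begin


lemma powr_gt_self: fixes x e :: real assumes "0<x" "x<1" "0<e" "e<1" shows "x < x powr e"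
  using assms(1,2,4) powr_less_mono' by fastforce

lemma gderiv:
  fixes c1 c2 e m :: real
  assumes "0<m" "m<1"
  shows "((\<lambda>\<mu>. (1-\<mu>) powr e * c1 + \<mu> powr e * c2) has_real_derivative
     (c1 * (- e * (1-m) powr (e-1)) + c2 * (e * m powr (e-1)))) (at m)"
  using assms
  by (auto intro!: derivative_eq_intros)

lemma G0:
  fixes c1 c2 e m :: real
  assumes e: "0<e" "e<1" and m: "0<m" "m<1"
    and mx: "\<forall>\<mu>. 0\<le>\<mu> \<and> \<mu>\<le>1 \<longrightarrow> (1-\<mu>) powr e * c1 + \<mu> powr e * c2 \<le> (1-m) powr e * c1 + m powr e * c2"
  shows "c1 * (1-m) powr (e-1) = c2 * m powr (e-1)"
    and "c1 < 0 \<Longrightarrow> c2 < 0 \<Longrightarrow> False"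
proof -
  have "c1 * (- e * (1-m) powr (e-1)) + c2 * (e * m powr (e-1)) = 0"
  proof (rule DERIV_local_max[OF gderiv[OF m]])
    show "0 < min m (1-m)" using m by simp
    show "\<forall>y. \<bar>m - y\<bar> < min m (1 - m) \<longrightarrow> (1-y) powr e * c1 + y powr e * c2 \<le> (1-m) powr e * c1 + m powr e * c2"
    proof (intro allI impI)
      fix y assume "\<bar>m - y\<bar> < min m (1 - m)"
      hence "0 \<le> y \<and> y \<le> 1" by (auto simp: abs_if split: if_splits)
      thus "(1-y) powr e * c1 + y powr e * c2 \<le> (1-m) powr e * c1 + m powr e * c2" using mx by blast
    qed
  qed
  then have "e * (c2 * m powr (e-1) - c1 * (1-m) powr (e-1)) = 0" by (simp add: algebra_simps)
  then show "c1 * (1-m) powr (e-1) = c2 * m powr (e-1)" using e by simp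
next
  assume c: "c1 < 0" "c2 < 0"
  have g0: "c1 \<le> (1-m) powr e * c1 + m powr e * c2" using mx[rule_format, of 0] by simp
  have g1: "c2 \<le> (1-m) powr e * c1 + m powr e * c2" using mx[rule_format, of 1] by simp
  have "1-m < (1-m) powr e" using powr_gt_self[of "1-m" e] e m by simp
  hence a: "(1-m) powr e * c1 < (1-m) * c1" using c by (simp add: mult_strict_right_mono_neg)
  have "m < m powr e" using powr_gt_self[of "m" e] e m by simp
  hence b: "m powr e * c2 < m * c2" using c by (simp add: mult_strict_right_mono_neg)
  have "(1-m) * c1 + m * c2 \<le> (1-m) * ((1-m) powr e * c1 + m powr e * c2) + m * ((1-m) powr e * c1 + m powr e * c2)"
    using g0 g1 m by (intro add_mono mult_left_mono) auto
  then show False using a b by (simp add: algebra_simps)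
qed


lemma root_part: fixes s Y S p :: real assumes "0 < s" "0 < Y" "0 < S" "p > 0"
  shows "(s * Y powr p / S) powr (1/p) = s powr (1/p) * Y / S powr (1/p)"
  using assms by (simp add: powr_divide powr_mult powr_powr)

lemma G1:
  fixes p s X Y A B m :: real
  assumes p: "p > 1" and s: "0<s" "s<1" and XY: "X>0" "Y>0"
    and m: "m = s * Y powr p / ((1-s) * X powr p + s * Y powr p)"
    and eq: "((1-s) powr (1/p) * A) * (1-m) powr ((1-1/p)-1) = (s powr (1/p) * B) * m powr ((1-1/p)-1)"
  shows "A * Y = B * X"
proof -
  define S where "S = (1-s) * X powr p + s * Y powr p"
  have S: "S > 0" using s XY by (simp add: S_def add_pos_pos)
  have m1: "1 - m = (1-s) * X powr p / S" using m S by (simp add: S_def field_simps)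
  have mpos: "m > 0" "1 - m > 0" using m1 m S s XY by (auto simp: S_def[symmetric])
  have e: "(1-1/p)-1 = - (1/p)" by simp
  have inv: "x powr (-(1/p)) * x powr (1/p) = 1" if "x > 0" for x :: real
    using that by (simp add: powr_add[symmetric])
  have abs: "c1 * V = c2 * U" if "c1 * u = c2 * v" "u * U = 1" "v * V = 1" for c1 c2 u v U V :: real
  proof -
    have "c1 * V = (c1 * u) * U * V" using that(2) by (simp add: mult.assoc)
    also have "\<dots> = c2 * (v * V) * U" using that(1) by (simp add: ac_simps)
    finally show ?thesis using that(3) by simp
  qed
  have "((1-s) powr (1/p) * A) * m powr (1/p) = (s powr (1/p) * B) * (1-m) powr (1/p)"
    apply (rule abs[of _ "(1-m) powr (-(1/p))" _ "m powr (-(1/p))"])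
    using eq e inv[OF mpos(1)] inv[OF mpos(2)] by (simp_all only: e mult.commute)
  moreover have "m powr (1/p) = s powr (1/p) * Y / S powr (1/p)"
    using root_part[of s Y S p] s XY S p m by (simp add: S_def)
  moreover have "(1-m) powr (1/p) = (1-s) powr (1/p) * X / S powr (1/p)"
    using root_part[of "1-s" X S p] s XY S p m1 by simp
  ultimately have "(1-s) powr (1/p) * s powr (1/p) * (A * Y) / S powr (1/p) = (1-s) powr (1/p) * s powr (1/p) * (B * X) / S powr (1/p)"
    by (simp add: algebra_simps)
  thus ?thesis using s S by simp
qed


lemma piece: fixes s X S p :: real assumes "0 < s" "0 < X" "0 < S" "p > 1"
  shows "(s * X powr p / S) powr (1-1/p) * s powr (1/p) * X = s * X powr p / S powr (1-1/p)"
proof -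
  have "(s * X powr p / S) powr (1-1/p) = s powr (1-1/p) * X powr (p-1) / S powr (1-1/p)"
    using assms by (simp add: powr_divide powr_mult powr_powr algebra_simps)
  moreover have "s powr (1-1/p) * s powr (1/p) = s" using assms by (simp add: powr_add[symmetric])
  moreover have "X powr (p-1) * X = X powr p" using assms by (simp add: powr_diff)
  ultimately show ?thesis by (simp add: field_simps)
qed

lemma Hold:
  fixes p s X Y m :: real
  assumes p: "p > 1" and s: "0<s" "s<1" and XY: "X>0" "Y>0"
    and m: "m = s * Y powr p / ((1-s) * X powr p + s * Y powr p)"
  shows "(1-m) powr (1-1/p) * (1-s) powr (1/p) * X + m powr (1-1/p) * s powr (1/p) * Y
     = ((1-s) * X powr p + s * Y powr p) powr (1/p)"
    and "0 < m" "m < 1"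
proof -
  define S where "S = (1-s) * X powr p + s * Y powr p"
  have S: "S > 0" using s XY by (simp add: S_def add_pos_pos)
  have m1: "1 - m = (1-s) * X powr p / S" using m S by (simp add: S_def field_simps)
  have m': "m = s * Y powr p / S" using m by (simp add: S_def)
  have "0 < (1-s) * X powr p" using s XY by simp
  hence "s * Y powr p < S" by (simp add: S_def)
  then show "0 < m" "m < 1" using m1 m' S s XY by auto
  have "(1-m) powr (1-1/p) * (1-s) powr (1/p) * X + m powr (1-1/p) * s powr (1/p) * Y
      = (1-s) * X powr p / S powr (1-1/p) + s * Y powr p / S powr (1-1/p)"
  proof -
    have h1: "(1-m) powr (1-1/p) * (1-s) powr (1/p) * X = (1-s) * X powr p / S powr (1-1/p)"
      using piece[of "1-s" X S p] s XY S p by (simp only: m1)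
    have h2: "m powr (1-1/p) * s powr (1/p) * Y = s * Y powr p / S powr (1-1/p)"
      using piece[of s Y S p] s XY S p by (simp only: m')
    show ?thesis using h1 h2 by simp
  qed
  also have "\<dots> = S / S powr (1-1/p)" by (simp add: S_def add_divide_distrib)
  also have "\<dots> = S powr (1/p)" using S powr_diff[of S 1 "1-1/p"] by simp
  finally show "(1-m) powr (1-1/p) * (1-s) powr (1/p) * X + m powr (1-1/p) * s powr (1/p) * Y
     = ((1-s) * X powr p + s * Y powr p) powr (1/p)" by (simp add: S_def)
qed

lemma sumle1:
  fixes p s \<mu> :: real
  assumes p: "p > 1" and s: "0<s" "s<1" and mu: "0 \<le> \<mu>" "\<mu> \<le> 1"
  shows "(1-\<mu>) powr (1-1/p) * (1-s) powr (1/p) + \<mu> powr (1-1/p) * s powr (1/p) \<le> 1"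
proof -
  have q: "0 \<le> 1-1/p" "0 \<le> 1/p" using p by auto
  have Y: "x powr (1-1/p) * y powr (1/p) \<le> (1-1/p) * x + (1/p) * y" if "0 \<le> x" "0 \<le> y" for x y :: real
  proof (cases "x = 0 \<or> y = 0")
    case True
    then show ?thesis using that p by auto
  next
    case False
    then show ?thesis using Youngs_inequality_0[of "1-1/p" "1/p" x y] that q by simp
  qed
  have "(1-\<mu>) powr (1-1/p) * (1-s) powr (1/p) + \<mu> powr (1-1/p) * s powr (1/p)
     \<le> ((1-1/p) * (1-\<mu>) + (1/p) * (1-s)) + ((1-1/p) * \<mu> + (1/p) * s)"
    using Y[of "1-\<mu>" "1-s"] Y[of \<mu> s] mu s by (intro add_mono) auto
  also have "\<dots> = 1" by (simp add: algebra_simps add_divide_distrib[symmetric])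
  finally show ?thesis .
qed


definition hsup :: "'a::euclidean_space set \<Rightarrow> 'a \<Rightarrow> real" where
  "hsup S u = (SUP x\<in>S. inner u x)"

lemma hsup_props:
  fixes S :: "'a::euclidean_space set"
  assumes "compact S" "S \<noteq> {}"
  shows "\<exists>x\<in>S. inner u x = hsup S u" "\<forall>y\<in>S. inner u y \<le> hsup S u"
proof -
  obtain x where x: "x \<in> S" "\<forall>y\<in>S. inner u y \<le> inner u x"
    using compact_attains_sup[of "(\<lambda>y. inner u y) ` S"] assms
    by (auto simp: compact_continuous_image continuous_on_inner continuous_on_id continuous_on_const)
  have "hsup S u = inner u x" unfolding hsup_def
    using x by (intro cSup_eq_maximum) auto
  thus "\<exists>x\<in>S. inner u x = hsup S u" "\<forall>y\<in>S. inner u y \<le> hsup S u" using x by auto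
qed

lemma hull_le:
  fixes S :: "'a::euclidean_space set"
  assumes "\<forall>x\<in>S. inner u x \<le> c" "z \<in> convex hull S"
  shows "inner u z \<le> c"
proof -
  have "convex hull S \<subseteq> {x. inner u x \<le> c}"
    using assms(1) by (intro hull_minimal) (auto simp: convex_halfspace_le)
  thus ?thesis using assms(2) by auto
qed

lemma zero_in_hull:
  fixes S :: "'a::euclidean_space set"
  assumes "compact S" "S \<noteq> {}" "\<forall>u. hsup S u \<ge> 0"
  shows "0 \<in> convex hull S"
proof (rule ccontr)
  assume "0 \<notin> convex hull S"
  moreover have "convex (convex hull S)" "closed (convex hull S)"
    using assms by (auto simp: compact_convex_hull compact_imp_closed)
  ultimately obtain a b where ab: "inner a 0 < b" "\<forall>x\<in>convex hull S. inner a x > b"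
    using separating_hyperplane_closed_point by blast
  obtain x where x: "x \<in> S" "inner (-a) x = hsup S (-a)" using hsup_props(1)[OF assms(1,2)] by blast
  have "x \<in> convex hull S" using hull_inc[OF x(1)] .
  hence "inner a x > b" using ab by auto
  thus False using x ab assms(3)[rule_format, of "-a"] by simp
qed

lemma hull_dilate:
  fixes K L :: "'a::euclidean_space set"
  assumes K: "compact K" "K \<noteq> {}" and L: "compact L" "L \<noteq> {}" and t: "t > 0"
    and h: "\<forall>u. hsup L u = t * hsup K u"
  shows "convex hull L = (\<lambda>x. t *\<^sub>R x) ` (convex hull K)"
proof
  let ?T = "(\<lambda>x. t *\<^sub>R x) ` (convex hull K)"
  have cT: "convex ?T" "closed ?T"
    using K by (auto simp: compact_convex_hull compact_imp_closed convex_scaling compact_scaling)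
  show "convex hull L \<subseteq> ?T"
  proof
    fix z assume z: "z \<in> convex hull L"
    show "z \<in> ?T"
    proof (rule ccontr)
      assume "z \<notin> ?T"
      then obtain a b where ab: "inner a z < b" "\<forall>x\<in>?T. inner a x > b"
        using separating_hyperplane_closed_point[OF cT] by blast
      obtain x where x: "x \<in> K" "inner (-a) x = hsup K (-a)" using hsup_props(1)[OF K] by blast
      have "t *\<^sub>R x \<in> ?T" using imageI[OF hull_inc[OF x(1)]] .
      hence "inner a (t *\<^sub>R x) > b" using ab by auto
      hence "t * hsup K (-a) < - b" using x(2)[symmetric] by simp
      moreover have "inner (-a) z \<le> hsup L (-a)"
        using hull_le[OF hsup_props(2)[OF L] z] .
      ultimately show False using h ab by simp
    qed
  qed
  show "?T \<subseteq> convex hull L"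
  proof
    fix w assume w: "w \<in> ?T"
    then obtain x where x: "x \<in> convex hull K" "w = t *\<^sub>R x" by blast
    show "w \<in> convex hull L"
    proof (rule ccontr)
      assume "w \<notin> convex hull L"
      moreover have "convex (convex hull L)" "closed (convex hull L)"
        using L by (auto simp: compact_convex_hull compact_imp_closed)
      ultimately obtain a b where ab: "inner a w < b" "\<forall>y\<in>convex hull L. inner a y > b"
        using separating_hyperplane_closed_point by blast
      obtain y where y: "y \<in> L" "inner (-a) y = hsup L (-a)" using hsup_props(1)[OF L] by blast
      have "y \<in> convex hull L" using hull_inc[OF y(1)] .
      hence hb: "hsup L (-a) < -b" using ab y by auto
      have "inner (-a) x \<le> hsup K (-a)" using hull_le[OF hsup_props(2)[OF K] x(1)] .
      hence "t * inner (-a) x \<le> t * hsup K (-a)" using t by (intro mult_left_mono) auto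
      hence "inner (-a) w \<le> hsup L (-a)" using h x by simp
      thus False using hb ab by simp
    qed
  qed
qed


lemma lin_comb_zero: "M \<noteq> {} \<Longrightarrow> lin_comb t M 0 M = (\<lambda>x. t *\<^sub>R x) ` M"
  unfolding lin_comb_def by auto

context
  fixes \<A> :: "'a::euclidean_space set set" and F :: "'a set \<Rightarrow> real" and \<alpha> :: real
  assumes nonempty: "\<forall>A\<in>\<A>. A \<noteq> {}"
    and closed: "closed_lin_comb \<A>"
    and alpha_neg: "\<alpha> < 0"
    and F_sh: "super_homogeneous_on \<A> F \<alpha>"
begin

lemma scale_in: "M \<in> \<A> \<Longrightarrow> (\<lambda>x. t *\<^sub>R x) ` M \<in> \<A>"
  using closed nonempty lin_comb_zero[of M t] unfolding closed_lin_comb_def by metis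

lemma scale_le:
  assumes M: "M \<in> \<A>" and t: "0 < t" "t \<le> 1"
  shows "F ((\<lambda>x. t *\<^sub>R x) ` M) \<le> t powr (1/\<alpha>) * F M"
proof -
  let ?N = "(\<lambda>x. t *\<^sub>R x) ` M"
  have N: "?N \<in> \<A>" using scale_in[OF M] .
  have r: "1 \<le> 1/t" using t by simp
  have img: "(\<lambda>x. (1/t) *\<^sub>R x) ` ?N = M" using t by (auto simp: image_image image_iff)
  have "(1/t) powr (1/\<alpha>) * F ?N \<le> F M"
    using F_sh N r img unfolding super_homogeneous_on_def by metis
  moreover have "(1/t) powr (1/\<alpha>) = 1 / t powr (1/\<alpha>)" using t by (simp add: powr_divide)
  moreover have "t powr (1/\<alpha>) > 0" using t by simp
  ultimately show ?thesis by (simp add: field_simps)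
qed

lemma scale_less:
  assumes SSH: "strictly_super_homogeneous_on \<A> F \<alpha>"
    and M: "M \<in> \<A>" and t: "0 < t" "t < 1" and pos: "F ((\<lambda>x. t *\<^sub>R x) ` M) > 0"
  shows "F ((\<lambda>x. t *\<^sub>R x) ` M) < t powr (1/\<alpha>) * F M"
proof -
  let ?N = "(\<lambda>x. t *\<^sub>R x) ` M"
  have N: "?N \<in> \<A>" using scale_in[OF M] .
  have r: "1 < 1/t" using t by simp
  have img: "(\<lambda>x. (1/t) *\<^sub>R x) ` ?N = M" using t by (auto simp: image_image image_iff)
  have "(1/t) powr (1/\<alpha>) * F ?N < F M"
    using SSH N r img pos unfolding strictly_super_homogeneous_on_def by metis
  moreover have "(1/t) powr (1/\<alpha>) = 1 / t powr (1/\<alpha>)" using t by (simp add: powr_divide)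
  moreover have "t powr (1/\<alpha>) > 0" using t by simp
  ultimately show ?thesis by (simp add: field_simps)
qed

context
  fixes K L :: "'a set" and C :: real
  assumes KL: "K \<in> \<A>" "L \<in> \<A>"
    and FKpos: "F K > 0" and FLpos: "F L > 0"
    and C_pos: "C > 0"
    and star: "\<forall>s. 0 < s \<and> s < 1 \<longrightarrow>
       F (lin_comb (1 - s) K s L)
         \<le> C * ((1 - s) * F K powr \<alpha> + s * F L powr \<alpha>) powr (1/\<alpha>)"
begin

lemma lc_in: "lin_comb a K b L \<in> \<A>"
  using closed KL unfolding closed_lin_comb_def by blast

lemma key:
  assumes ab: "a > 0" "b > 0" "a + b \<le> 1"
  defines "u \<equiv> b / (a+b)"
  shows "F (lin_comb a K b L) \<le> C * (a * F K powr \<alpha> + b * F L powr \<alpha>) powr (1/\<alpha>)"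
    and "F (lin_comb a K b L) \<ge> C * (a * F K powr \<alpha> + b * F L powr \<alpha>) powr (1/\<alpha>) \<Longrightarrow>
         F (lin_comb (1-u) K u L) = C * ((1-u) * F K powr \<alpha> + u * F L powr \<alpha>) powr (1/\<alpha>)"
    and "strictly_super_homogeneous_on \<A> F \<alpha> \<Longrightarrow> a + b < 1 \<Longrightarrow>
         F (lin_comb a K b L) < C * (a * F K powr \<alpha> + b * F L powr \<alpha>) powr (1/\<alpha>)"
    and "0 < u" "u < 1"
proof -
  define t where "t = a + b"
  have t: "0 < t" "t \<le> 1" using ab by (auto simp: t_def)
  show u: "0 < u" "u < 1" using ab by (auto simp: u_def)
  have u1: "1 - u = a / t" using t by (simp add: u_def t_def field_simps)
  define M where "M = lin_comb (1-u) K u L"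
  have M: "M \<in> \<A>" unfolding M_def by (rule lc_in)
  have eqs: "t * (1-u) = a" "t * u = b" using t u1 by (auto simp: u_def t_def)
  have img: "lin_comb a K b L = (\<lambda>x. t *\<^sub>R x) ` M"
  proof -
    have "t *\<^sub>R ((1-u) *\<^sub>R x + u *\<^sub>R y) = a *\<^sub>R x + b *\<^sub>R y" for x y :: 'a
      by (simp only: scaleR_add_right scaleR_scaleR eqs)
    thus ?thesis unfolding M_def lin_comb_def by (auto simp: image_iff) metis+
  qed
  define X where "X = F K powr \<alpha>"
  define Y where "Y = F L powr \<alpha>"
  have XY: "X > 0" "Y > 0" using FKpos FLpos by (auto simp: X_def Y_def)
  define Z where "Z = (1-u) * X + u * Y"
  have Z: "Z > 0" using u XY by (simp add: Z_def add_pos_pos)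
  have tZ: "t * Z = a * X + b * Y" using eqs by (simp add: Z_def algebra_simps)
  have FM: "F M \<le> C * Z powr (1/\<alpha>)" using star u by (simp add: M_def Z_def X_def Y_def)
  have prod: "t powr (1/\<alpha>) * (C * Z powr (1/\<alpha>)) = C * (a * X + b * Y) powr (1/\<alpha>)"
    using t Z by (simp add: tZ[symmetric] powr_mult)
  have prod': "t powr (1/\<alpha>) * (C * Z powr (1/\<alpha>)) = C * (a * F K powr \<alpha> + b * F L powr \<alpha>) powr (1/\<alpha>)"
    using prod unfolding X_def Y_def .
  have tp: "t powr (1/\<alpha>) > 0" using t by simp
  have sl: "F (lin_comb a K b L) \<le> t powr (1/\<alpha>) * F M"
    unfolding img using scale_le[OF M t] .
  also have "\<dots> \<le> t powr (1/\<alpha>) * (C * Z powr (1/\<alpha>))" using FM tp by simp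
  finally show "F (lin_comb a K b L) \<le> C * (a * F K powr \<alpha> + b * F L powr \<alpha>) powr (1/\<alpha>)"
    using prod by (simp add: X_def Y_def)
  {
    assume ge: "F (lin_comb a K b L) \<ge> C * (a * F K powr \<alpha> + b * F L powr \<alpha>) powr (1/\<alpha>)"
    have "t powr (1/\<alpha>) * (C * Z powr (1/\<alpha>)) \<le> t powr (1/\<alpha>) * F M"
      using ge sl prod' by linarith
    hence "C * Z powr (1/\<alpha>) \<le> F M" using tp by simp
    thus "F (lin_comb (1-u) K u L) = C * ((1-u) * F K powr \<alpha> + u * F L powr \<alpha>) powr (1/\<alpha>)"
      using FM by (simp add: M_def Z_def X_def Y_def)
  }
  {
    assume SSH: "strictly_super_homogeneous_on \<A> F \<alpha>" and lt: "a + b < 1"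
    have "a * X + b * Y > 0" using ab XY by (simp add: add_pos_pos)
    hence Cpos: "C * (a * X + b * Y) powr (1/\<alpha>) > 0" using C_pos by simp
    show "F (lin_comb a K b L) < C * (a * F K powr \<alpha> + b * F L powr \<alpha>) powr (1/\<alpha>)"
    proof (cases "F (lin_comb a K b L) > 0")
      case True
      have "F (lin_comb a K b L) < t powr (1/\<alpha>) * F M"
        unfolding img apply (rule scale_less[OF SSH M t(1)])
        using lt True img by (auto simp: t_def)
      also have "\<dots> \<le> t powr (1/\<alpha>) * (C * Z powr (1/\<alpha>))" using FM tp by simp
      finally show ?thesis using prod by (simp add: X_def Y_def)
    next
      case False
      then show ?thesis using Cpos by (simp add: X_def Y_def)
    qed
  }
qed

context
  assumes F_dec: "decreasing_on \<A> F"
begin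

lemma sub_P:
  fixes p s \<mu> :: real
  assumes p: "p > 1" and mu: "0 \<le> \<mu>" "\<mu> \<le> 1"
  shows "lin_comb ((1-\<mu>) powr (1-1/p) * (1-s) powr (1/p)) K (\<mu> powr (1-1/p) * s powr (1/p)) L
     \<subseteq> p_sum p (p_scale p (1 - s) K) (p_scale p s L)"
proof
  fix z assume "z \<in> lin_comb ((1-\<mu>) powr (1-1/p) * (1-s) powr (1/p)) K (\<mu> powr (1-1/p) * s powr (1/p)) L"
  then obtain x y where xy: "x \<in> K" "y \<in> L"
    and z: "z = ((1-\<mu>) powr (1-1/p) * (1-s) powr (1/p)) *\<^sub>R x + (\<mu> powr (1-1/p) * s powr (1/p)) *\<^sub>R y"
    unfolding lin_comb_def by blast
  have z': "z = ((1 - \<mu>) powr (1 - 1/p)) *\<^sub>R ((1-s) powr (1/p) *\<^sub>R x) + (\<mu> powr (1 - 1/p)) *\<^sub>R (s powr (1/p) *\<^sub>R y)"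
    using z by simp
  have m1: "(1-s) powr (1/p) *\<^sub>R x \<in> p_scale p (1 - s) K" "s powr (1/p) *\<^sub>R y \<in> p_scale p s L"
    using xy unfolding p_scale_def by auto
  have P': "p_sum p A B = {((1 - \<nu>) powr (1 - 1/p)) *\<^sub>R x + (\<nu> powr (1 - 1/p)) *\<^sub>R y | x y \<nu>. x \<in> A \<and> y \<in> B \<and> 0 \<le> \<nu> \<and> \<nu> \<le> 1}" for A B :: "'a set"
    using p by (simp add: p_sum_def)
  show "z \<in> p_sum p (p_scale p (1 - s) K) (p_scale p s L)"
    unfolding P' using z' m1 mu by blast
qed

lemma main_p:
  fixes p s :: real
  assumes p: "p > 1" and s: "0 < s" "s < 1"
    and PA: "p_sum p (p_scale p (1 - s) K) (p_scale p s L) \<in> \<A>"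
  defines "P \<equiv> p_sum p (p_scale p (1 - s) K) (p_scale p s L)"
    and "R \<equiv> C * ((1 - s) * F K powr (p * \<alpha>) + s * F L powr (p * \<alpha>)) powr (1/(p * \<alpha>))"
  shows "F P \<le> R"
    and "F P = R \<Longrightarrow> (\<exists>u. 0 < u \<and> u < 1 \<and>
            F (lin_comb (1 - u) K u L)
              = C * ((1 - u) * F K powr \<alpha> + u * F L powr \<alpha>) powr (1/\<alpha>))"
    and "F P = R \<Longrightarrow> strictly_decreasing_on \<A> F \<Longrightarrow> compact K \<Longrightarrow> compact L \<Longrightarrow>
            0 \<in> convex hull K \<and> 0 \<in> convex hull L \<and>
            (\<exists>t::real. t \<ge> 0 \<and>
               (convex hull K = (\<lambda>x. t *\<^sub>R x) ` (convex hull L) \<or>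
                convex hull L = (\<lambda>x. t *\<^sub>R x) ` (convex hull K)))
            \<and>
            (strictly_super_homogeneous_on \<A> F \<alpha> \<longrightarrow> convex hull K = convex hull L)"
proof -
  define X where "X = F K powr \<alpha>"
  define Y where "Y = F L powr \<alpha>"
  have XY: "X > 0" "Y > 0" using FKpos FLpos by (auto simp: X_def Y_def)
  define a where "a = (\<lambda>\<mu>::real. (1-\<mu>) powr (1-1/p) * (1-s) powr (1/p))"
  define b where "b = (\<lambda>\<mu>::real. \<mu> powr (1-1/p) * s powr (1/p))"
  define m where "m = s * Y powr p / ((1-s) * X powr p + s * Y powr p)"
  define S where "S = (1-s) * X powr p + s * Y powr p"
  have hold: "a m * X + b m * Y = S powr (1/p)" and m: "0 < m" "m < 1"
    using Hold[OF p s XY m_def] by (auto simp: a_def b_def S_def)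
  have ab1: "a m + b m \<le> 1" using sumle1[OF p s, of m] m by (simp add: a_def b_def)
  have abpos: "a m > 0" "b m > 0" using m s by (auto simp: a_def b_def)
  have SR: "C * (S powr (1/p)) powr (1/\<alpha>) = R"
  proof -
    have "X powr p = F K powr (p * \<alpha>)" "Y powr p = F L powr (p * \<alpha>)"
      by (simp_all add: X_def Y_def powr_powr mult.commute)
    moreover have "(S powr (1/p)) powr (1/\<alpha>) = S powr (1/(p*\<alpha>))" by (simp add: powr_powr)
    ultimately show ?thesis by (simp add: R_def S_def)
  qed
  define LC where "LC = lin_comb (a m) K (b m) L"
  have LCA: "LC \<in> \<A>" unfolding LC_def by (rule lc_in)
  have LCP: "LC \<subseteq> P" unfolding LC_def P_def a_def b_def using sub_P[OF p] m by auto
  have PLC: "F P \<le> F LC" using F_dec LCA PA LCP unfolding decreasing_on_def P_def by blast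
  have LCR: "F LC \<le> R" using key(1)[OF abpos ab1] hold SR
    by (simp add: LC_def X_def Y_def)
  show "F P \<le> R" using PLC LCR by linarith
  assume eq: "F P = R"
  have LCeq: "F LC = R" using eq PLC LCR by linarith
  show "\<exists>u. 0 < u \<and> u < 1 \<and>
            F (lin_comb (1 - u) K u L)
              = C * ((1 - u) * F K powr \<alpha> + u * F L powr \<alpha>) powr (1/\<alpha>)"
  proof (intro exI conjI)
    have "F LC \<ge> C * (a m * F K powr \<alpha> + b m * F L powr \<alpha>) powr (1/\<alpha>)"
      using LCeq hold SR by (simp add: X_def Y_def)
    thus "F (lin_comb (1 - b m / (a m + b m)) K (b m / (a m + b m)) L) =
      C * ((1 - b m / (a m + b m)) * F K powr \<alpha> + b m / (a m + b m) * F L powr \<alpha>) powr (1 / \<alpha>)"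
      using key(2)[OF abpos ab1] unfolding LC_def by blast
    show "0 < b m / (a m + b m)" "b m / (a m + b m) < 1" using key(4,5)[OF abpos ab1] by auto
  qed
  assume SD: "strictly_decreasing_on \<A> F" and cK: "compact K" and cL: "compact L"
  have neK: "K \<noteq> {}" and neL: "L \<noteq> {}" using nonempty KL by auto
  have PeqLC: "P = LC"
  proof (rule ccontr)
    assume "P \<noteq> LC"
    hence "LC \<subset> P" using LCP by auto
    hence "F P < F LC" using SD LCA PA unfolding strictly_decreasing_on_def P_def by blast
    thus False using LCeq eq by simp
  qed
  have supp: "hsup K u * Y = hsup L u * X \<and> hsup K u \<ge> 0" for u
  proof -
    define hA where "hA = hsup K u"
    define hB where "hB = hsup L u"
    obtain xK where xK: "xK \<in> K" "inner u xK = hA" using hsup_props(1)[OF cK neK] hA_def by blast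
    obtain yL where yL: "yL \<in> L" "inner u yL = hB" using hsup_props(1)[OF cL neL] hB_def by blast
    have maxK: "\<forall>x\<in>K. inner u x \<le> hA" using hsup_props(2)[OF cK neK] hA_def by blast
    have maxL: "\<forall>y\<in>L. inner u y \<le> hB" using hsup_props(2)[OF cL neL] hB_def by blast
    have gle: "a \<mu> * hA + b \<mu> * hB \<le> a m * hA + b m * hB" if mu: "0 \<le> \<mu>" "\<mu> \<le> 1" for \<mu>
    proof -
      have "a \<mu> *\<^sub>R xK + b \<mu> *\<^sub>R yL \<in> lin_comb (a \<mu>) K (b \<mu>) L"
        using xK yL unfolding lin_comb_def by blast
      also have "\<dots> \<subseteq> P" unfolding P_def a_def b_def using sub_P[OF p mu] .
      finally have "a \<mu> *\<^sub>R xK + b \<mu> *\<^sub>R yL \<in> LC" using PeqLC by simp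
      then obtain x' y' where x'y': "x' \<in> K" "y' \<in> L" "a \<mu> *\<^sub>R xK + b \<mu> *\<^sub>R yL = a m *\<^sub>R x' + b m *\<^sub>R y'"
        unfolding LC_def lin_comb_def by blast
      have "a \<mu> * hA + b \<mu> * hB = inner u (a \<mu> *\<^sub>R xK + b \<mu> *\<^sub>R yL)"
        using xK yL by (simp add: inner_add_right)
      also have "\<dots> = a m * inner u x' + b m * inner u y'" using x'y' by (simp add: inner_add_right)
      also have "\<dots> \<le> a m * hA + b m * hB"
        using maxK maxL x'y' abpos by (intro add_mono mult_left_mono) auto
      finally show ?thesis .
    qed
    have e: "0 < 1-1/p" "1-1/p < 1" using p by auto
    have mx: "\<forall>\<mu>. 0\<le>\<mu> \<and> \<mu>\<le>1 \<longrightarrow> (1-\<mu>) powr (1-1/p) * ((1-s) powr (1/p) * hA) + \<mu> powr (1-1/p) * (s powr (1/p) * hB)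
       \<le> (1-m) powr (1-1/p) * ((1-s) powr (1/p) * hA) + m powr (1-1/p) * (s powr (1/p) * hB)"
      using gle by (simp add: a_def b_def mult.assoc)
    have d: "((1-s) powr (1/p) * hA) * (1-m) powr ((1-1/p)-1) = (s powr (1/p) * hB) * m powr ((1-1/p)-1)"
      using G0(1)[OF e m mx] .
    have r1: "hA * Y = hB * X" using G1[OF p s XY m_def d] .
    have "hA \<ge> 0"
    proof (rule ccontr)
      assume "\<not> hA \<ge> 0"
      hence hA: "hA < 0" by simp
      have "hB = hA * Y / X" using r1 XY by (simp add: field_simps)
      hence "hB < 0" using hA XY by (simp add: divide_neg_pos mult_neg_pos)
      show False using G0(2)[OF e m mx] hA \<open>hB < 0\<close> s by (simp add: mult_pos_neg)
    qed
    thus ?thesis using r1 hA_def hB_def by simp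
  qed
  have hL: "hsup L u = (Y / X) * hsup K u" for u using supp[of u] XY by (simp add: field_simps)
  have z1: "0 \<in> convex hull K" using zero_in_hull[OF cK neK] supp by blast
  have z2: "0 \<in> convex hull L"
    using zero_in_hull[OF cL neL] hL supp XY by (simp add: zero_le_mult_iff)
  have dil: "convex hull L = (\<lambda>x. (Y/X) *\<^sub>R x) ` (convex hull K)"
    using hull_dilate[OF cK neK cL neL _ allI[OF hL]] XY by simp
  have ssh: "convex hull K = convex hull L" if SSH: "strictly_super_homogeneous_on \<A> F \<alpha>"
  proof -
    have "a m + b m = 1"
    proof (rule ccontr)
      assume "a m + b m \<noteq> 1"
      hence "a m + b m < 1" using ab1 by simp
      hence "F LC < C * (a m * F K powr \<alpha> + b m * F L powr \<alpha>) powr (1/\<alpha>)"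
        using key(3)[OF abpos ab1 SSH] unfolding LC_def by blast
      thus False using LCeq hold SR by (simp add: X_def Y_def)
    qed
    have e: "0 < 1-1/p" "1-1/p < 1" using p by auto
    have mx: "\<forall>\<mu>. 0\<le>\<mu> \<and> \<mu>\<le>1 \<longrightarrow> (1-\<mu>) powr (1-1/p) * ((1-s) powr (1/p) * 1) + \<mu> powr (1-1/p) * (s powr (1/p) * 1)
       \<le> (1-m) powr (1-1/p) * ((1-s) powr (1/p) * 1) + m powr (1-1/p) * (s powr (1/p) * 1)"
      using sumle1[OF p s] \<open>a m + b m = 1\<close> by (simp add: a_def b_def)
    have d: "((1-s) powr (1/p) * 1) * (1-m) powr ((1-1/p)-1) = (s powr (1/p) * 1) * m powr ((1-1/p)-1)"
      using G0(1)[OF e m mx] .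
    have "1 * Y = 1 * X" using G1[OF p s XY m_def d] .
    hence "Y / X = 1" using XY by simp
    thus ?thesis using dil by simp
  qed
  show "0 \<in> convex hull K \<and> 0 \<in> convex hull L \<and>
            (\<exists>t::real. t \<ge> 0 \<and>
               (convex hull K = (\<lambda>x. t *\<^sub>R x) ` (convex hull L) \<or>
                convex hull L = (\<lambda>x. t *\<^sub>R x) ` (convex hull K)))
            \<and>
            (strictly_super_homogeneous_on \<A> F \<alpha> \<longrightarrow> convex hull K = convex hull L)"
    using z1 z2 dil ssh XY by (intro conjI exI[of _ "Y/X"]) auto
qed

end
end
end

theorem mainTheorem4:
  fixes \<A> :: "'a::euclidean_space set set"
    and F :: "'a set \<Rightarrow> real"
    and \<alpha> C :: real and K L :: "'a set"
  assumes nonempty: "\<forall>A\<in>\<A>. A \<noteq> {}"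
    and closed: "closed_lin_comb \<A>"
    and F_nonneg: "\<forall>A\<in>\<A>. F A \<ge> 0"
    and F_dec: "decreasing_on \<A> F"
    and alpha_neg: "\<alpha> < 0"
    and F_sh: "super_homogeneous_on \<A> F \<alpha>"
    and KL: "K \<in> \<A>" "L \<in> \<A>"
    and pos: "F K * F L > 0"
    and C_pos: "C > 0"
    and star: "\<forall>s. 0 < s \<and> s < 1 \<longrightarrow>
       F (lin_comb (1 - s) K s L)
         \<le> C * ((1 - s) * F K powr \<alpha> + s * F L powr \<alpha>) powr (1/\<alpha>)"
  shows
    "(\<forall>p s. p \<ge> 1 \<and> 0 < s \<and> s < 1 \<and>
         p_sum p (p_scale p (1 - s) K) (p_scale p s L) \<in> \<A> \<longrightarrow>
         F (p_sum p (p_scale p (1 - s) K) (p_scale p s L))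
           \<le> C * ((1 - s) * F K powr (p * \<alpha>) + s * F L powr (p * \<alpha>)) powr (1/(p * \<alpha>)))
     \<and>
     (\<forall>p s. p > 1 \<and> 0 < s \<and> s < 1 \<and>
         p_sum p (p_scale p (1 - s) K) (p_scale p s L) \<in> \<A> \<and>
         F (p_sum p (p_scale p (1 - s) K) (p_scale p s L))
           = C * ((1 - s) * F K powr (p * \<alpha>) + s * F L powr (p * \<alpha>)) powr (1/(p * \<alpha>))
       \<longrightarrow>
         (\<exists>u. 0 < u \<and> u < 1 \<and>
            F (lin_comb (1 - u) K u L)
              = C * ((1 - u) * F K powr \<alpha> + u * F L powr \<alpha>) powr (1/\<alpha>))
         \<and>
         (strictly_decreasing_on \<A> F \<and> compact K \<and> compact L \<longrightarrow>
            0 \<in> convex hull K \<and> 0 \<in> convex hull L \<and>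
            (\<exists>t::real. t \<ge> 0 \<and>
               (convex hull K = (\<lambda>x. t *\<^sub>R x) ` (convex hull L) \<or>
                convex hull L = (\<lambda>x. t *\<^sub>R x) ` (convex hull K)))
            \<and>
            (strictly_super_homogeneous_on \<A> F \<alpha> \<longrightarrow> convex hull K = convex hull L)))"
  proof -
  have FK: "F K > 0" and FL: "F L > 0"
    using pos F_nonneg KL by (auto simp: zero_less_mult_iff)
  note M = main_p[OF nonempty closed alpha_neg F_sh KL FK FL C_pos star F_dec]
  have P1: "F (p_sum p (p_scale p (1 - s) K) (p_scale p s L))
           \<le> C * ((1 - s) * F K powr (p * \<alpha>) + s * F L powr (p * \<alpha>)) powr (1/(p * \<alpha>))"
    if h: "1 \<le> p \<and> 0 < s \<and> s < 1 \<and> p_sum p (p_scale p (1 - s) K) (p_scale p s L) \<in> \<A>" for p s :: real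
  proof (cases "p = 1")
    case True
    have "p_sum p (p_scale p (1 - s) K) (p_scale p s L) = lin_comb (1-s) K s L"
      using True h unfolding p_sum_def p_scale_def lin_comb_def by auto
    thus ?thesis using star h True by simp
  next
    case False
    thus ?thesis using M(1)[of p s] h by simp
  qed
  show ?thesis
    apply (rule conjI)
    subgoal using P1 by blast
    subgoal using M(2) M(3) by blast
    done
qed

end
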